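(* Let $p$ be an odd prime and let $\mathcal{A}=(G_x,G_e,G_{xy})$ be a finite, primitive amalgam of degree $(p,2)$. If $q$ is a prime dividing $|G_{xy}|$, then $q<p$.
   Context: An amalgam $(A_1,A_2,B,\pi_1,\pi_2)$ consists of groups with monomorphisms $\pi_i:B\to A_i$; here $G_{xy}$ is identified with its images in $G_x$ and $G_e$. Degree $(p,2)$ means $|G_x:G_{xy}|=p$ and $|G_e:G_{xy}|=2$; finite means $G_{xy}$ is finite; primitive means the only subgroup of $G_{xy}$ normal in both $G_x$ and $G_e$ is trivial. *)

theory Defs
  imports "HOL-Algebra.Algebra"
begin

text \<open>An amalgam (A1, A2, B, pi1, pi2): groups with monomorphisms pi_i : B \<rightarrow> A_i.
  Here A1 plays the role of G_x, A2 of G_e and B of G_xy.\<close>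
definition amalgam :: "'a monoid \<Rightarrow> 'b monoid \<Rightarrow> 'c monoid \<Rightarrow> ('c \<Rightarrow> 'a) \<Rightarrow> ('c \<Rightarrow> 'b) \<Rightarrow> bool" where
  "amalgam A1 A2 B pi1 pi2 \<longleftrightarrow>
     group A1 \<and> group A2 \<and> group B \<and> pi1 \<in> mon B A1 \<and> pi2 \<in> mon B A2"

text \<open>Index of a subset H in G: number of right cosets (0 if infinite).\<close>
definition grp_index :: "('a, 'm) monoid_scheme \<Rightarrow> 'a set \<Rightarrow> nat" where
  "grp_index G H = card (rcosets\<^bsub>G\<^esub> H)"

definition amalgam_degree :: "'a monoid \<Rightarrow> 'b monoid \<Rightarrow> 'c monoid \<Rightarrow> ('c \<Rightarrow> 'a) \<Rightarrow> ('c \<Rightarrow> 'b) \<Rightarrow> nat \<Rightarrow> nat \<Rightarrow> bool" where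
  "amalgam_degree A1 A2 B pi1 pi2 m n \<longleftrightarrow>
     grp_index A1 (pi1 ` carrier B) = m \<and> grp_index A2 (pi2 ` carrier B) = n"

definition amalgam_finite :: "'c monoid \<Rightarrow> bool" where
  "amalgam_finite B \<longleftrightarrow> finite (carrier B)"

definition amalgam_primitive :: "'a monoid \<Rightarrow> 'b monoid \<Rightarrow> 'c monoid \<Rightarrow> ('c \<Rightarrow> 'a) \<Rightarrow> ('c \<Rightarrow> 'b) \<Rightarrow> bool" where
  "amalgam_primitive A1 A2 B pi1 pi2 \<longleftrightarrow>
     (\<forall>K. subgroup K B \<and> pi1 ` K \<lhd> A1 \<and> pi2 ` K \<lhd> A2 \<longrightarrow> K = {\<one>\<^bsub>B\<^esub>})"

end

theory Submission
  imports Defs "HOL-Computational_Algebra.Primes"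
begin

lemma (in group) coset_eq_iff:
  assumes "subgroup H G" "a \<in> carrier G" "b \<in> carrier G"
  shows "H #> a = H #> b \<longleftrightarrow> a \<otimes> inv b \<in> H"
proof
  assume "H #> a = H #> b"
  then have "a \<in> H #> b" using rcos_self[OF assms(2,1)] by simp
  then show "a \<otimes> inv b \<in> H" using subgroup.rcos_module[OF assms(1) is_group assms(3,2)] by simp
next
  assume "a \<otimes> inv b \<in> H"
  then have "a \<in> H #> b" using subgroup.rcos_module[OF assms(1) is_group assms(3,2)] by simp
  then show "H #> a = H #> b" using repr_independence[OF _ assms(3,1)] by simp
qed

lemma (in group) conj_pow:
  assumes "x \<in> carrier G" "y \<in> carrier G"
  shows "(x \<otimes> y \<otimes> inv x) [^] (n::nat) = x \<otimes> y [^] n \<otimes> inv x"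
proof (induction n)
  case 0
  then show ?case using assms by (simp add: r_inv)
next
  case (Suc n)
  have "(x \<otimes> y \<otimes> inv x) [^] Suc n = (x \<otimes> y [^] n \<otimes> inv x) \<otimes> (x \<otimes> y \<otimes> inv x)"
    using Suc by simp
  also have "\<dots> = x \<otimes> (y [^] n \<otimes> y) \<otimes> inv x"
    using assms by (simp add: m_assoc[symmetric] nat_pow_closed) (simp add: m_assoc nat_pow_closed)
  finally show ?case by simp
qed

lemma (in group) index2_normal:
  assumes H: "subgroup H G" and c: "card (rcosets H) = 2"
  shows "H \<lhd> G"
proof -
  have fin: "finite (rcosets H)" using c by (metis card.infinite zero_neq_numeral)
  have HR: "H \<in> rcosets H" using subgroup.subgroup_in_rcosets[OF H is_group] .
  have ne: "H #> y \<noteq> H" if "y \<in> carrier G" "y \<notin> H" for y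
    using rcos_self[OF that(1) H] that(2) by auto
  have same: "H #> y = H #> z" if "y \<in> carrier G" "y \<notin> H" "z \<in> carrier G" "z \<notin> H" for y z
  proof (rule ccontr)
    assume nz: "H #> y \<noteq> H #> z"
    have "{H, H #> y, H #> z} \<subseteq> rcosets H" using HR rcosetsI[OF subgroup.subset[OF H]] that by auto
    then have "card {H, H #> y, H #> z} \<le> 2" using card_mono[OF fin] c by metis
    moreover have n1: "H #> y \<noteq> H" "H #> z \<noteq> H" using ne that by auto
    moreover have "card {H, H #> y, H #> z} = 3" using n1 nz by (simp add: card_insert_if)
    ultimately show False by simp
  qed
  show ?thesis
  proof (subst normal_inv_iff, intro conjI ballI H)
    fix x h assume x: "x \<in> carrier G" and h: "h \<in> H"
    have hc: "h \<in> carrier G" using h subgroup.mem_carrier[OF H] by auto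
    show "x \<otimes> h \<otimes> inv x \<in> H"
    proof (cases "x \<in> H")
      case True
      then show ?thesis using h H by (simp add: subgroup.m_closed subgroup.m_inv_closed)
    next
      case False
      have "x \<otimes> h \<notin> H"
      proof
        assume "x \<otimes> h \<in> H"
        then have "(x \<otimes> h) \<otimes> inv h \<in> H" using h H by (simp add: subgroup.m_closed subgroup.m_inv_closed)
        then show False using False x hc by (simp add: m_assoc)
      qed
      then have "H #> (x \<otimes> h) = H #> x" using same[of "x \<otimes> h" x] x hc False by simp
      then show ?thesis using coset_eq_iff[OF H, of "x \<otimes> h" x] x hc by simp
    qed
  qed
qed

lemma (in group) inv_cancel_l:
  "x \<in> carrier G \<Longrightarrow> w \<in> carrier G \<Longrightarrow> inv x \<otimes> (x \<otimes> w) = w"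
  by (simp add: m_assoc[symmetric])

lemma (in group) subgroup_pow_in:
  assumes "subgroup H G" "g \<in> H" shows "g [^] (n::nat) \<in> H"
proof (induction n)
  case 0 then show ?case using assms by (simp add: subgroup.one_closed)
next
  case (Suc n) then show ?case using assms by (simp add: subgroup.m_closed)
qed

lemma (in group) qelem_in_core:
  assumes H: "subgroup H G" and fin: "finite (rcosets H)" and cq: "card (rcosets H) \<le> q"
    and q: "Factorial_Ring.prime q" and g: "g \<in> H" and gN: "g [^] (q ^ k) = \<one>" and x: "x \<in> carrier G"
  shows "x \<otimes> g \<otimes> inv x \<in> H"
proof (cases "x \<in> H")
  case True
  then show ?thesis using g H by (simp add: subgroup.m_closed subgroup.m_inv_closed)
next
  case xH: False
  have gc: "g \<in> carrier G" using g subgroup.mem_carrier[OF H] by auto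
  define c where "c y = x \<otimes> y \<otimes> inv x" for y
  have cmul: "c (y \<otimes> z) = c y \<otimes> c z" if "y \<in> carrier G" "z \<in> carrier G" for y z
    unfolding c_def using that x by (simp add: m_assoc inv_cancel_l)
  have cc: "c y \<in> carrier G" if "y \<in> carrier G" for y unfolding c_def using that x by simp
  define R where "R n \<longleftrightarrow> c (g [^] n) \<in> H" for n :: nat
  have Radd: "R (a + b)" if "R a" "R b" for a b
    using that unfolding R_def by (simp add: nat_pow_mult[symmetric] cmul gc subgroup.m_closed[OF H])
  have Rsub: "R b" if "R a" "R (a + b)" for a b
  proof -
    have "c (g [^] b) = inv (c (g [^] a)) \<otimes> c (g [^] (a + b))"
      by (simp add: nat_pow_mult[symmetric] cmul gc cc m_assoc[symmetric])
    then show ?thesis using that unfolding R_def by (simp add: subgroup.m_closed[OF H] subgroup.m_inv_closed[OF H])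
  qed
  have Rmult: "R (m * d)" if "R d" for m d
  proof (induction m)
    case 0 then show ?case by (simp add: R_def c_def x subgroup.one_closed[OF H])
  next
    case (Suc m) then show ?case using Radd[OF that Suc.IH] by simp
  qed
  have qpos: "q ^ k > 0" using q prime_gt_0_nat by simp
  have RN: "R (q ^ k)" unfolding R_def c_def using gN x by (simp add: subgroup.one_closed[OF H])
  define d where "d = (LEAST n. 0 < n \<and> R n)"
  have dex: "0 < d \<and> R d" unfolding d_def by (rule LeastI[of _ "q ^ k"]) (use qpos RN in auto)
  have dmin: "\<not> R n" if "0 < n" "n < d" for n using not_less_Least[of n "\<lambda>n. 0 < n \<and> R n"] that d_def by auto
  have "d dvd q ^ k"
  proof -
    have "R ((q ^ k) div d * d + (q ^ k) mod d)" using RN by simp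
    then have "R ((q ^ k) mod d)" using Rsub Rmult dex by blast
    then have "(q ^ k) mod d = 0" using dmin[of "(q ^ k) mod d"] dex by auto
    then show ?thesis by auto
  qed
  then obtain i where i: "d = q ^ i" using divides_primepow_nat[OF q] by auto
  define C where "C i = H #> (x \<otimes> g [^] i)" for i :: nat
  have Ceq: "C i = C j \<Longrightarrow> R (j - i)" if "i \<le> j" for i j
  proof -
    assume "C i = C j"
    then have "(x \<otimes> g [^] i) \<otimes> inv (x \<otimes> g [^] j) \<in> H"
      unfolding C_def using coset_eq_iff[OF H] x gc by simp
    moreover have "(x \<otimes> g [^] i) \<otimes> inv (x \<otimes> g [^] j) = inv (c (g [^] (j - i)))"
    proof -
      have j: "g [^] j = g [^] (j - i) \<otimes> g [^] i" using that gc by (simp add: nat_pow_mult)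
      show ?thesis unfolding c_def j using x gc
        by (simp add: inv_mult_group m_assoc inv_cancel_l) (simp add: m_assoc[symmetric])
    qed
    ultimately show "R (j - i)" unfolding R_def using subgroup.m_inv_closed[OF H]
      by (metis cc gc inv_inv nat_pow_closed)
  qed
  have inj: "inj_on C {0..<d}"
  proof (rule inj_onI)
    fix i j assume ij: "i \<in> {0..<d}" "j \<in> {0..<d}" "C i = C j"
    show "i = j"
    proof (rule ccontr)
      assume "i \<noteq> j"
      then consider "i < j" | "j < i" by linarith
      then show False
      proof cases
        case 1
        have "R (j - i)" using Ceq[of i j] 1 ij by auto
        moreover have "j - i < d" "0 < j - i" using 1 ij by auto
        ultimately show False using dmin by blast
      next
        case 2
        have "R (i - j)" using Ceq[of j i] 2 ij by auto
        moreover have "i - j < d" "0 < i - j" using 2 ij by auto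
        ultimately show False using dmin by blast
      qed
    qed
  qed
  have sub: "C ` {0..<d} \<subseteq> rcosets H - {H}"
  proof
    fix Y assume "Y \<in> C ` {0..<d}"
    then obtain n where Y: "Y = C n" by auto
    have xn: "x \<otimes> g [^] n \<in> carrier G" using x gc by simp
    have "Y \<in> rcosets H" unfolding Y C_def using rcosetsI[OF subgroup.subset[OF H] xn] .
    moreover have "Y \<noteq> H"
    proof
      assume "Y = H"
      then have "x \<otimes> g [^] n \<in> H" using rcos_self[OF xn H] Y C_def by simp
      then have "(x \<otimes> g [^] n) \<otimes> inv (g [^] n) \<in> H"
        using g H by (simp add: subgroup.m_closed subgroup.m_inv_closed subgroup_pow_in)
      then show False using xH x gc by (simp add: m_assoc)
    qed
    ultimately show "Y \<in> rcosets H - {H}" by simp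
  qed
  have "d = card (C ` {0..<d})" using card_image[OF inj] by simp
  also have "\<dots> \<le> card (rcosets H - {H})" using card_mono[OF _ sub] fin by simp
  also have "\<dots> = card (rcosets H) - 1"
    using card_Diff_singleton[OF subgroup.subgroup_in_rcosets[OF H is_group]] by simp
  also have "\<dots> < q"
  proof -
    have "0 < card (rcosets H)" using fin subgroup.subgroup_in_rcosets[OF H is_group] card_gt_0_iff by blast
    then show ?thesis using cq by linarith
  qed
  finally have "d < q" .
  have "i = 0"
  proof (rule ccontr)
    assume "i \<noteq> 0"
    then have "q \<le> q ^ i" using self_le_power[of q i] prime_gt_0_nat[OF q] by simp
    then show False using i \<open>d < q\<close> by simp
  qed
  then have "R 1" using i dex by simp
  then show ?thesis unfolding R_def c_def using gc by simp
qed

lemma gen_img_normal: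
  assumes GB: "group B" and GA: "group A" and f: "f \<in> hom B A" and S: "S \<subseteq> carrier B"
    and inv: "\<And>a s. a \<in> carrier A \<Longrightarrow> s \<in> S \<Longrightarrow> \<exists>s'\<in>S. a \<otimes>\<^bsub>A\<^esub> f s \<otimes>\<^bsub>A\<^esub> inv\<^bsub>A\<^esub> a = f s'"
  shows "f ` generate B S \<lhd> A"
proof -
  interpret B: group B by (rule GB)
  interpret A: group A by (rule GA)
  interpret h: group_hom B A f using GB GA f by (simp add: group_hom_def group_hom_axioms_def)
  have sg: "subgroup (generate B S) B" using B.generate_is_subgroup[OF S] .
  have main: "\<forall>a\<in>carrier A. a \<otimes>\<^bsub>A\<^esub> f y \<otimes>\<^bsub>A\<^esub> inv\<^bsub>A\<^esub> a \<in> f ` generate B S"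
    if "y \<in> generate B S" for y
    using that
  proof (induction y rule: generate.induct)
    case one
    then show ?case by (auto intro!: image_eqI[of _ _ "\<one>\<^bsub>B\<^esub>"] generate.one)
  next
    case (incl h)
    then show ?case using inv by (blast intro: generate.incl)
  next
    case (inv h)
    show ?case
    proof
      fix a assume a: "a \<in> carrier A"
      obtain s' where s': "s' \<in> S" "a \<otimes>\<^bsub>A\<^esub> f h \<otimes>\<^bsub>A\<^esub> inv\<^bsub>A\<^esub> a = f s'"
        using assms(5)[OF a inv.hyps] by blast
      have hc: "h \<in> carrier B" using inv.hyps S by auto
      have s'c: "s' \<in> carrier B" using s' S by auto
      have "a \<otimes>\<^bsub>A\<^esub> f (inv\<^bsub>B\<^esub> h) \<otimes>\<^bsub>A\<^esub> inv\<^bsub>A\<^esub> a = inv\<^bsub>A\<^esub> (a \<otimes>\<^bsub>A\<^esub> f h \<otimes>\<^bsub>A\<^esub> inv\<^bsub>A\<^esub> a)"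
        using a hc by (simp add: A.inv_mult_group A.m_assoc)
      also have "\<dots> = f (inv\<^bsub>B\<^esub> s')" using s' s'c by simp
      finally show "a \<otimes>\<^bsub>A\<^esub> f (inv\<^bsub>B\<^esub> h) \<otimes>\<^bsub>A\<^esub> inv\<^bsub>A\<^esub> a \<in> f ` generate B S"
        using s' by (auto intro: generate.inv)
    qed
  next
    case (eng h1 h2)
    show ?case
    proof
      fix a assume a: "a \<in> carrier A"
      obtain y1 where y1: "y1 \<in> generate B S" "a \<otimes>\<^bsub>A\<^esub> f h1 \<otimes>\<^bsub>A\<^esub> inv\<^bsub>A\<^esub> a = f y1"
        using eng.IH(1) a by blast
      obtain y2 where y2: "y2 \<in> generate B S" "a \<otimes>\<^bsub>A\<^esub> f h2 \<otimes>\<^bsub>A\<^esub> inv\<^bsub>A\<^esub> a = f y2"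
        using eng.IH(2) a by blast
      have c1: "h1 \<in> carrier B" "h2 \<in> carrier B" using eng.hyps B.generate_in_carrier[OF S] by auto
      have c2: "y1 \<in> carrier B" "y2 \<in> carrier B" using y1 y2 B.generate_in_carrier[OF S] by auto
      have "a \<otimes>\<^bsub>A\<^esub> f (h1 \<otimes>\<^bsub>B\<^esub> h2) \<otimes>\<^bsub>A\<^esub> inv\<^bsub>A\<^esub> a
          = (a \<otimes>\<^bsub>A\<^esub> f h1 \<otimes>\<^bsub>A\<^esub> inv\<^bsub>A\<^esub> a) \<otimes>\<^bsub>A\<^esub> (a \<otimes>\<^bsub>A\<^esub> f h2 \<otimes>\<^bsub>A\<^esub> inv\<^bsub>A\<^esub> a)"
        using a c1 by (simp add: A.m_assoc A.inv_cancel_l)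
      also have "\<dots> = f (y1 \<otimes>\<^bsub>B\<^esub> y2)" using y1 y2 c2 by simp
      finally show "a \<otimes>\<^bsub>A\<^esub> f (h1 \<otimes>\<^bsub>B\<^esub> h2) \<otimes>\<^bsub>A\<^esub> inv\<^bsub>A\<^esub> a \<in> f ` generate B S"
        using y1 y2 by (auto intro: generate.eng)
    qed
  qed
  show ?thesis
    unfolding A.normal_inv_iff
    using h.subgroup_img_is_subgroup[OF sg] main by blast
qed

lemma side_cond:
  assumes GB: "group B" and GA: "group A" and m: "f \<in> mon B A"
    and core: "\<And>a y k. a \<in> carrier A \<Longrightarrow> y \<in> f ` carrier B \<Longrightarrow> y [^]\<^bsub>A\<^esub> (q ^ k :: nat) = \<one>\<^bsub>A\<^esub>
                 \<Longrightarrow> a \<otimes>\<^bsub>A\<^esub> y \<otimes>\<^bsub>A\<^esub> inv\<^bsub>A\<^esub> a \<in> f ` carrier B"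
    and a: "a \<in> carrier A" and s: "s \<in> {b \<in> carrier B. \<exists>k. b [^]\<^bsub>B\<^esub> (q ^ k :: nat) = \<one>\<^bsub>B\<^esub>}"
  shows "\<exists>s'\<in>{b \<in> carrier B. \<exists>k. b [^]\<^bsub>B\<^esub> (q ^ k :: nat) = \<one>\<^bsub>B\<^esub>}.
           a \<otimes>\<^bsub>A\<^esub> f s \<otimes>\<^bsub>A\<^esub> inv\<^bsub>A\<^esub> a = f s'"
proof -
  interpret B: group B by (rule GB)
  interpret A: group A by (rule GA)
  have hom: "f \<in> hom B A" and inj: "inj_on f (carrier B)" using m by (auto simp: mon_def)
  interpret h: group_hom B A f using GB GA hom by (simp add: group_hom_def group_hom_axioms_def)
  obtain k where sc: "s \<in> carrier B" and sk: "s [^]\<^bsub>B\<^esub> (q ^ k :: nat) = \<one>\<^bsub>B\<^esub>" using s by auto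
  have fk: "f s [^]\<^bsub>A\<^esub> (q ^ k :: nat) = \<one>\<^bsub>A\<^esub>" using h.hom_nat_pow[OF sc, of "q ^ k"] sk by simp
  have "a \<otimes>\<^bsub>A\<^esub> f s \<otimes>\<^bsub>A\<^esub> inv\<^bsub>A\<^esub> a \<in> f ` carrier B" using core[OF a _ fk] sc by auto
  then obtain s' where s'c: "s' \<in> carrier B" and s'e: "a \<otimes>\<^bsub>A\<^esub> f s \<otimes>\<^bsub>A\<^esub> inv\<^bsub>A\<^esub> a = f s'" by auto
  have "f (s' [^]\<^bsub>B\<^esub> (q ^ k :: nat)) = (a \<otimes>\<^bsub>A\<^esub> f s \<otimes>\<^bsub>A\<^esub> inv\<^bsub>A\<^esub> a) [^]\<^bsub>A\<^esub> (q ^ k :: nat)"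
    using h.hom_nat_pow[OF s'c] s'e by simp
  also have "\<dots> = a \<otimes>\<^bsub>A\<^esub> (f s [^]\<^bsub>A\<^esub> (q ^ k :: nat)) \<otimes>\<^bsub>A\<^esub> inv\<^bsub>A\<^esub> a"
    using A.conj_pow a sc by simp
  also have "\<dots> = f \<one>\<^bsub>B\<^esub>" using fk a by simp
  finally have "s' [^]\<^bsub>B\<^esub> (q ^ k :: nat) = \<one>\<^bsub>B\<^esub>"
    using inj s'c h.hom_one by (metis B.nat_pow_closed B.one_closed inj_onD)
  then show ?thesis using s'c s'e by blast
qed

theorem mainTheorem4:
  fixes A1 :: "'a monoid" and A2 :: "'b monoid" and B :: "'c monoid"
    and pi1 :: "'c \<Rightarrow> 'a" and pi2 :: "'c \<Rightarrow> 'b" and p q :: nat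
  assumes "Factorial_Ring.prime p" and "odd p"
    and "amalgam A1 A2 B pi1 pi2"
    and "amalgam_finite B"
    and "amalgam_primitive A1 A2 B pi1 pi2"
    and "amalgam_degree A1 A2 B pi1 pi2 p 2"
    and "Factorial_Ring.prime q" and "q dvd order B"
  shows "q < p"
proof (rule ccontr)
  assume "\<not> q < p"
  then have pq: "p \<le> q" by simp
  have G1: "group A1" and G2: "group A2" and GB: "group B" and m1: "pi1 \<in> mon B A1" and m2: "pi2 \<in> mon B A2"
    using assms(3) by (auto simp: amalgam_def)
  interpret A1: group A1 by (rule G1)
  interpret A2: group A2 by (rule G2)
  interpret B: group B by (rule GB)
  have h1: "group_hom B A1 pi1" using m1 G1 GB by (simp add: mon_def group_hom_def group_hom_axioms_def)
  have h2: "group_hom B A2 pi2" using m2 G2 GB by (simp add: mon_def group_hom_def group_hom_axioms_def)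
  have sg1: "subgroup (pi1 ` carrier B) A1" using group_hom.img_is_subgroup[OF h1] .
  have sg2: "subgroup (pi2 ` carrier B) A2" using group_hom.img_is_subgroup[OF h2] .
  have c1: "card (rcosets\<^bsub>A1\<^esub> (pi1 ` carrier B)) = p" and c2: "card (rcosets\<^bsub>A2\<^esub> (pi2 ` carrier B)) = 2"
    using assms(6) by (auto simp: amalgam_degree_def grp_index_def)
  have fin1: "finite (rcosets\<^bsub>A1\<^esub> (pi1 ` carrier B))" using c1 assms(1)
    by (metis card.infinite not_prime_0)
  have nrm2: "pi2 ` carrier B \<lhd> A2" using A2.index2_normal[OF sg2 c2] .
  define S where "S = {b \<in> carrier B. \<exists>k. b [^]\<^bsub>B\<^esub> (q ^ k :: nat) = \<one>\<^bsub>B\<^esub>}"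
  have Ssub: "S \<subseteq> carrier B" unfolding S_def by auto
  have n1: "pi1 ` generate B S \<lhd> A1"
  proof (rule gen_img_normal[OF GB G1 _ Ssub])
    show "pi1 \<in> hom B A1" using m1 by (simp add: mon_def)
    fix a s assume a: "a \<in> carrier A1" and s: "s \<in> S"
    show "\<exists>s'\<in>S. a \<otimes>\<^bsub>A1\<^esub> pi1 s \<otimes>\<^bsub>A1\<^esub> inv\<^bsub>A1\<^esub> a = pi1 s'"
      unfolding S_def
    proof (rule side_cond[OF GB G1 m1 _ a s[unfolded S_def]])
      fix a y k assume "a \<in> carrier A1" "y \<in> pi1 ` carrier B" "y [^]\<^bsub>A1\<^esub> (q ^ k :: nat) = \<one>\<^bsub>A1\<^esub>"
      then show "a \<otimes>\<^bsub>A1\<^esub> y \<otimes>\<^bsub>A1\<^esub> inv\<^bsub>A1\<^esub> a \<in> pi1 ` carrier B"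
        using A1.qelem_in_core[OF sg1 fin1 _ assms(7)] c1 pq by simp
    qed
  qed
  have n2: "pi2 ` generate B S \<lhd> A2"
  proof (rule gen_img_normal[OF GB G2 _ Ssub])
    show "pi2 \<in> hom B A2" using m2 by (simp add: mon_def)
    fix a s assume a: "a \<in> carrier A2" and s: "s \<in> S"
    show "\<exists>s'\<in>S. a \<otimes>\<^bsub>A2\<^esub> pi2 s \<otimes>\<^bsub>A2\<^esub> inv\<^bsub>A2\<^esub> a = pi2 s'"
      unfolding S_def
    proof (rule side_cond[OF GB G2 m2 _ a s[unfolded S_def]])
      fix a y k assume "a \<in> carrier A2" "y \<in> pi2 ` carrier B"
      then show "a \<otimes>\<^bsub>A2\<^esub> y \<otimes>\<^bsub>A2\<^esub> inv\<^bsub>A2\<^esub> a \<in> pi2 ` carrier B"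
        using nrm2 A2.normal_inv_iff by blast
    qed
  qed
  have K: "generate B S = {\<one>\<^bsub>B\<^esub>}"
    using assms(5) n1 n2 B.generate_is_subgroup[OF Ssub] by (auto simp: amalgam_primitive_def)
  have finB: "finite (carrier B)" using assms(4) by (simp add: amalgam_finite_def)
  have "order B = q ^ 1 * (order B div q)" using assms(8) by simp
  then obtain P where P: "subgroup P B" "card P = q ^ 1"
    using sylow_thm[OF assms(7) GB _ finB] by blast
  have q2: "q \<ge> 2" using assms(7) prime_ge_2_nat by blast
  have "P \<noteq> {\<one>\<^bsub>B\<^esub>}" using P q2 by auto
  then obtain b where bP: "b \<in> P" and b1: "b \<noteq> \<one>\<^bsub>B\<^esub>" using subgroup.one_closed[OF P(1)] by blast
  interpret PG: group "B\<lparr>carrier := P\<rparr>" using subgroup.subgroup_is_group[OF P(1) GB] .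
  have "b [^]\<^bsub>B\<lparr>carrier := P\<rparr>\<^esub> order (B\<lparr>carrier := P\<rparr>) = \<one>\<^bsub>B\<lparr>carrier := P\<rparr>\<^esub>"
    using PG.pow_order_eq_1 bP by simp
  then have "b [^]\<^bsub>B\<^esub> (q ^ 1 :: nat) = \<one>\<^bsub>B\<^esub>" using P(2) by (simp add: order_def nat_pow_def)
  moreover have "b \<in> carrier B" using bP subgroup.subset[OF P(1)] by auto
  ultimately have "b \<in> S" unfolding S_def by blast
  then have "b \<in> generate B S" by (rule generate.incl)
  then show False using K b1 by simp
qed

end
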